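(* Let $G$ be a graph, $t\in\mathbb N$, and let $I_t=I_t^{(\mathcal P)}(G)$ for $\mathcal P\in\{push,pull,pp\}$. Then, conditional on $I_t$, there exist $m\in\mathbb N$, independent random variables $X_1,\dots,X_m$ and a self-bounding function $f=f^{(\mathcal P)}$ such that $|I_{t+1}|=f(X_1,\dots,X_m)$.
   Context: Rumour spreading protocols on a graph $G$ in synchronous rounds. push: every informed vertex chooses a neighbour independently and uniformly at random (iuar) and informs it. pull: every uninformed vertex chooses a neighbour iuar and becomes informed if that neighbour is informed. push\&pull (pp): every vertex chooses a neighbour iuar and if one of the two is informed both become informed. $I_t^{(\mathcal P)}(G)$ is the set of vertices informed at the beginning of round $t$. A non-negative function $f:X^m\to\mathbb R$ is self-bounding if there exist functions $f_i:X^{m-1}\to\mathbb R$ such that for all $x_1,\dots,x_m\in X$ and all $i$, $0\le f(x_1,\dots,x_m)-f_i(x_1,\dots,x_{i-1},x_{i+1},\dots,x_m)\le1$, and $\sum_{i=1}^m\big(f(x_1,\dots,x_m)-f_i(x_1,\dots,x_{i-1},x_{i+1},\dots,x_m)\big)\le f(x_1,\dots,x_m)$. *)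

theory Defs
  imports "HOL-Probability.Probability"
begin

definition graph :: "'a set \<Rightarrow> ('a \<Rightarrow> 'a \<Rightarrow> bool) \<Rightarrow> bool" where
  "graph V E \<longleftrightarrow> finite V \<and> (\<forall>u v. E u v \<longrightarrow> u \<in> V \<and> v \<in> V)
     \<and> (\<forall>u v. E u v \<longrightarrow> E v u) \<and> (\<forall>v. \<not> E v v)"

definition nbrs :: "'a set \<Rightarrow> ('a \<Rightarrow> 'a \<Rightarrow> bool) \<Rightarrow> 'a \<Rightarrow> 'a set" where
  "nbrs V E v = {u \<in> V. E v u}"

datatype protocol = Push | Pull | PushPull

definition round_choices :: "'a set \<Rightarrow> ('a \<Rightarrow> 'a \<Rightarrow> bool) \<Rightarrow> ('a \<Rightarrow> 'a) pmf" where
  "round_choices V E = Pi_pmf V undefined (\<lambda>v. pmf_of_set (nbrs V E v))"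

fun next_informed :: "protocol \<Rightarrow> 'a set \<Rightarrow> 'a set \<Rightarrow> ('a \<Rightarrow> 'a) \<Rightarrow> 'a set" where
  "next_informed Push V I c = I \<union> c ` I"
| "next_informed Pull V I c = I \<union> {u \<in> V. c u \<in> I}"
| "next_informed PushPull V I c = I \<union> c ` I \<union> {u \<in> V. c u \<in> I}"

text \<open>Self-bounding functions f : X^m \<rightarrow> \<real>; points of X^m are lists of length m over X,
and the i-th argument is removed by deleting the i-th list entry.\<close>

definition remove_nth :: "nat \<Rightarrow> 'x list \<Rightarrow> 'x list" where
  "remove_nth i xs = take i xs @ drop (Suc i) xs"

definition self_bounding :: "'x set \<Rightarrow> nat \<Rightarrow> ('x list \<Rightarrow> real) \<Rightarrow> bool" where
  "self_bounding X m f \<longleftrightarrow>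
     (\<exists>g :: nat \<Rightarrow> 'x list \<Rightarrow> real.
        \<forall>xs. length xs = m \<and> set xs \<subseteq> X \<longrightarrow>
          f xs \<ge> 0 \<and>
          (\<forall>i<m. 0 \<le> f xs - g i (remove_nth i xs) \<and> f xs - g i (remove_nth i xs) \<le> 1) \<and>
          (\<Sum>i<m. f xs - g i (remove_nth i xs)) \<le> f xs)"

end

theory Submission
  imports Defs
begin


lemma remove_nth_nth:
  assumes "length xs = m" "i < m" "j < m" "j \<noteq> i"
  shows "remove_nth i xs ! (if j < i then j else j - 1) = xs ! j"
  using assms by (auto simp: remove_nth_def nth_append min_def)

lemma sb_generic:
  fixes B :: "'b set" and C :: "nat \<Rightarrow> 'x \<Rightarrow> 'b set"
  assumes finB: "finite B" and finC: "\<And>j x. finite (C j x)" and cardC: "\<And>j x. card (C j x) \<le> 1"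
  shows "self_bounding S m (\<lambda>xs. real (card (B \<union> (\<Union>j<m. C j (xs!j)))))"
  unfolding self_bounding_def
proof (rule exI[of _ "\<lambda>i ys. real (card (B \<union> (\<Union>j\<in>{..<m}-{i}. C j (ys ! (if j < i then j else j - 1)))))"], intro allI impI)
  let ?g = "\<lambda>i ys. real (card (B \<union> (\<Union>j\<in>{..<m}-{i}. C j (ys ! (if j < i then j else j - 1)))))"
  fix xs :: "'x list"
  assume a: "length xs = m \<and> set xs \<subseteq> S"
  define N where "N = B \<union> (\<Union>j<m. C j (xs!j))"
  define A where "A i = B \<union> (\<Union>j\<in>{..<m}-{i}. C j (xs!j))" for i
  have Neq: "B \<union> (\<Union>j<m. C j (xs!j)) = N" by (simp add: N_def)
  have finN: "finite N" unfolding N_def using finB finC by auto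
  have gA: "?g i (remove_nth i xs) = real (card (A i))" if "i < m" for i
  proof -
    have "(\<Union>j\<in>{..<m}-{i}. C j (remove_nth i xs ! (if j < i then j else j - 1)))
        = (\<Union>j\<in>{..<m}-{i}. C j (xs!j))"
      using remove_nth_nth[of xs m i] a that by (intro SUP_cong) auto
    then show ?thesis unfolding A_def by simp
  qed
  have AN: "A i \<subseteq> N" for i unfolding A_def N_def by auto
  have NA: "N = A i \<union> C i (xs!i)" if "i < m" for i
    unfolding A_def N_def using that by auto
  have cA: "card (A i) \<le> card N" for i using AN finN card_mono by blast
  have cN: "card N \<le> card (A i) + 1" if "i < m" for i
  proof -
    have "card N \<le> card (A i) + card (C i (xs!i))" using NA[OF that] card_Un_le by metis
    then show ?thesis using cardC[of i "xs!i"] by linarith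
  qed
  have P1: "0 \<le> real (card (B \<union> (\<Union>j<m. C j (xs!j))))" by simp
  have P2: "\<forall>i<m. 0 \<le> real (card (B \<union> (\<Union>j<m. C j (xs!j)))) - ?g i (remove_nth i xs) \<and>
         real (card (B \<union> (\<Union>j<m. C j (xs!j)))) - ?g i (remove_nth i xs) \<le> 1"
    using gA cA cN unfolding Neq by force
  define D where "D = {i. i < m \<and> card (A i) < card N}"
  have le: "real (card N) - ?g i (remove_nth i xs) \<le> (if i \<in> D then 1 else 0)" if "i < m" for i
    unfolding gA[OF that] using cA[of i] cN[OF that] that unfolding D_def by auto
  have "(\<Sum>i<m. real (card N) - ?g i (remove_nth i xs)) \<le> (\<Sum>i<m. (if i \<in> D then 1 else 0))"
    by (intro sum_mono le) auto
  also have "\<dots> = real (card D)"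
    unfolding D_def by (simp add: sum.If_cases Int_def)
  also have "card D \<le> card N"
  proof -
    have ex: "\<exists>w. w \<in> C i (xs!i) \<and> w \<notin> A i" if "i \<in> D" for i
    proof (rule ccontr)
      assume "\<not> ?thesis"
      then have "N = A i" using NA[of i] that unfolding D_def by auto
      then show False using that unfolding D_def by auto
    qed
    define w where "w i = (SOME w. w \<in> C i (xs!i) \<and> w \<notin> A i)" for i
    have w: "w i \<in> C i (xs!i) \<and> w i \<notin> A i" if "i \<in> D" for i
      unfolding w_def using someI_ex[OF ex[OF that]] .
    have inj: "inj_on w D"
    proof (rule inj_onI)
      fix i k assume "i \<in> D" "k \<in> D" "w i = w k"
      show "i = k"
      proof (rule ccontr)
        assume "i \<noteq> k"
        then have "C k (xs!k) \<subseteq> A i" using \<open>k \<in> D\<close> unfolding A_def D_def by auto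
        then show False using w[OF \<open>i\<in>D\<close>] w[OF \<open>k\<in>D\<close>] \<open>w i = w k\<close> by auto
      qed
    qed
    have "w ` D \<subseteq> N" using w NA unfolding D_def by auto
    then show ?thesis using card_inj_on_le[OF inj _ finN] by blast
  qed
  finally have P3: "(\<Sum>i<m. real (card (B \<union> (\<Union>j<m. C j (xs!j)))) - ?g i (remove_nth i xs))
      \<le> real (card (B \<union> (\<Union>j<m. C j (xs!j))))" unfolding Neq by simp
  show "0 \<le> real (card (B \<union> (\<Union>j<m. C j (xs!j)))) \<and> (\<forall>i<m. 0 \<le> real (card (B \<union> (\<Union>j<m. C j (xs!j)))) - ?g i (remove_nth i xs) \<and>
         real (card (B \<union> (\<Union>j<m. C j (xs!j)))) - ?g i (remove_nth i xs) \<le> 1) \<and> (\<Sum>i<m. real (card (B \<union> (\<Union>j<m. C j (xs!j)))) - ?g i (remove_nth i xs))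
      \<le> real (card (B \<union> (\<Union>j<m. C j (xs!j))))" using P1 P2 P3 by blast
qed


lemma (in prob_space) indep_sets_reindex:
  assumes inj: "inj_on h I" and ind: "indep_sets F (h ` I)"
  shows "indep_sets (\<lambda>i. F (h i)) I"
  unfolding indep_sets_def
proof (intro conjI ballI allI impI)
  fix i assume "i \<in> I" then show "F (h i) \<subseteq> events" using ind unfolding indep_sets_def by auto
next
  fix J A assume J: "J \<subseteq> I" "J \<noteq> {}" "finite J" and A: "A \<in> Pi J (\<lambda>i. F (h i))"
  define A' where "A' k = A (the_inv_into J h k)" for k
  have injJ: "inj_on h J" using inj J(1) inj_on_subset by blast
  have A'h: "A' (h j) = A j" if "j \<in> J" for j
    unfolding A'_def using the_inv_into_f_f[OF injJ that] by simp
  have "A' \<in> Pi (h ` J) F" using A A'h by auto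
  then have "prob (\<Inter>k\<in>h ` J. A' k) = (\<Prod>k\<in>h ` J. prob (A' k))"
    using ind J unfolding indep_sets_def by (meson finite_imageI image_is_empty image_mono)
  also have "(\<Inter>k\<in>h ` J. A' k) = (\<Inter>j\<in>J. A j)" using A'h by auto
  also have "(\<Prod>k\<in>h ` J. prob (A' k)) = (\<Prod>j\<in>J. prob (A j))"
    using prod.reindex[OF injJ, of "\<lambda>k. prob (A' k)"] A'h by simp
  finally show "prob (\<Inter>j\<in>J. A j) = (\<Prod>j\<in>J. prob (A j))" .
qed

lemma indep_list:
  assumes "distinct vs" "set vs = V"
  shows "prob_space.indep_vars (measure_pmf (Pi_pmf V d p)) (\<lambda>_. count_space UNIV)
           (\<lambda>i c. c (vs ! i)) {..<length vs}"
proof -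
  have ps: "prob_space (measure_pmf (Pi_pmf V d p))" by (rule measure_pmf.prob_space_axioms)
  have fin: "finite V" using assms by auto
  have iv: "prob_space.indep_vars (measure_pmf (Pi_pmf V d p)) (\<lambda>_. count_space UNIV) (\<lambda>x f. f x) V"
    by (rule indep_vars_Pi_pmf[OF fin])
  have inj: "inj_on ((!) vs) {..<length vs}" using assms(1) by (simp add: inj_on_def nth_eq_iff_index_eq)
  have im: "(!) vs ` {..<length vs} = V" using assms(2) by (auto simp: in_set_conv_nth)
  show ?thesis
    using iv unfolding prob_space.indep_vars_def2[OF ps]
    using prob_space.indep_sets_reindex[OF ps inj, of "\<lambda>v. {(\<lambda>f. f v) -` A \<inter> space (measure_pmf (Pi_pmf V d p)) |A. A \<in> sets (count_space UNIV)}"]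
    unfolding im by auto
qed


definition cont :: "protocol \<Rightarrow> 'a set \<Rightarrow> 'a \<Rightarrow> 'a \<Rightarrow> 'a set" where
  "cont P I v x = (case P of
      Push \<Rightarrow> (if v \<in> I then {x} else {})
    | Pull \<Rightarrow> (if v \<notin> I \<and> x \<in> I then {v} else {})
    | PushPull \<Rightarrow> (if v \<in> I then {x} else {}) \<union> (if v \<notin> I \<and> x \<in> I then {v} else {}))"

lemma cont_fin: "finite (cont P I v x)" by (cases P) (auto simp: cont_def)
lemma cont_card: "card (cont P I v x) \<le> 1" by (cases P) (auto simp: cont_def)

lemma next_cont:
  assumes "I \<subseteq> V"
  shows "next_informed P V I c = I \<union> (\<Union>v\<in>V. cont P I v (c v))"
  using assms by (cases P) (auto simp: cont_def split: if_splits)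

theorem lemma2p4:
  fixes V :: "'a set" and E :: "'a \<Rightarrow> 'a \<Rightarrow> bool" and P :: protocol and I :: "'a set"
  assumes "graph V E"
    and "\<forall>v\<in>V. nbrs V E v \<noteq> {}"
    and "I \<subseteq> V"
  shows "\<exists>(m::nat) (S::'a set) (X :: nat \<Rightarrow> ('a \<Rightarrow> 'a) \<Rightarrow> 'a) (f :: 'a list \<Rightarrow> real).
           prob_space.indep_vars (measure_pmf (round_choices V E)) (\<lambda>_. count_space S) X {..<m}
         \<and> self_bounding S m f
         \<and> (\<forall>c \<in> set_pmf (round_choices V E).
              real (card (next_informed P V I c)) = f (map (\<lambda>i. X i c) [0..<m]))"
proof -
  have "finite V" using assms(1) unfolding graph_def by auto
  then obtain vs where vs: "set vs = V" "distinct vs" using finite_distinct_list by blast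
  define m where "m = length vs"
  have finI: "finite I" using assms(3) \<open>finite V\<close> finite_subset by blast
  have ind: "prob_space.indep_vars (measure_pmf (round_choices V E)) (\<lambda>_. count_space UNIV)
           (\<lambda>i c. c (vs ! i)) {..<m}"
    unfolding round_choices_def m_def using indep_list[OF vs(2) vs(1)] .
  have sb: "self_bounding UNIV m (\<lambda>xs. real (card (I \<union> (\<Union>j<m. cont P I (vs!j) (xs!j)))))"
    by (rule sb_generic[OF finI cont_fin cont_card])
  have eq: "real (card (next_informed P V I c)) =
      (\<lambda>xs. real (card (I \<union> (\<Union>j<m. cont P I (vs!j) (xs!j))))) (map (\<lambda>i. c (vs ! i)) [0..<m])" for c
  proof -
    have "(\<Union>j<m. cont P I (vs!j) (map (\<lambda>i. c (vs ! i)) [0..<m] ! j)) = (\<Union>j<m. cont P I (vs!j) (c (vs!j)))"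
      by (intro SUP_cong) auto
    also have "\<dots> = (\<Union>v\<in>V. cont P I v (c v))"
      unfolding vs(1)[symmetric] m_def by (auto simp: in_set_conv_nth) (metis nth_mem)
    finally show ?thesis using next_cont[OF assms(3)] by simp
  qed
  show ?thesis using ind sb eq by blast
qed

end
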